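(* Let $\psi\in C([0,1])$ satisfy $\psi(0)<0$, $\psi(1)<0$, and $\psi(x_0)>0$ for some $x_0\in(0,1)$. Then $$\inf_{u\in M(\psi)}\mathcal{E}(u)\le c_p(G)^p.$$
   Context: Fix $p\in(1,\infty)$. $G \in C^\infty(\mathbb{R})$ is odd, $\dot G>0$, and $s\mapsto s\dot G(s)$ belongs to $L^1(\mathbb{R})$. $c_p(G) := 2\lim_{s\to\infty}G(s)$. $M(\psi) := \{ v \in W^{2,p}(0,1)\cap W^{1,p}_0(0,1) : v \ge \psi \text{ on } [0,1]\}$ and $\mathcal{E}(u) := \int_0^1 |(G(u'))'|^p\,dx$. *)

theory Defs
  imports "HOL-Analysis.Analysis"
begin

text \<open>Functions on [0,1] are represented by functions real => real; values outside
  [0,1] are irrelevant. In one dimension, v in W^{2,p}(0,1) means (for its continuous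
  representative): v is differentiable on [0,1] with derivative v1, v1 is absolutely
  continuous, i.e. v1 x = v1 0 + int_0^x w, with w in L^p(0,1).\<close>

definition W2p :: "real \<Rightarrow> (real \<Rightarrow> real) \<Rightarrow> bool" where
  "W2p p v \<longleftrightarrow> (\<exists>v1 w.
      (\<forall>x\<in>{0..1}. (v has_real_derivative v1 x) (at x within {0..1})) \<and>
      set_integrable lborel {0..1::real} w \<and>
      set_integrable lborel {0..1::real} (\<lambda>x. \<bar>w x\<bar> powr p) \<and>
      (\<forall>x\<in>{0..1}. v1 x = v1 0 + integral {0..x} w))"

definition obstacle_set :: "real \<Rightarrow> (real \<Rightarrow> real) \<Rightarrow> (real \<Rightarrow> real) set" where
  "obstacle_set p \<psi> = {v. W2p p v \<and> v 0 = 0 \<and> v 1 = 0 \<and> (\<forall>x\<in>{0..1}. v x \<ge> \<psi> x)}"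

definition deriv01 :: "(real \<Rightarrow> real) \<Rightarrow> real \<Rightarrow> real" where
  "deriv01 u x = (SOME d. (u has_real_derivative d) (at x within {0..1}))"

text \<open>Weak derivative of the absolutely continuous function f on [0,1]
  (unique up to null sets, so integrals of it are well defined).\<close>
definition weak_deriv01 :: "(real \<Rightarrow> real) \<Rightarrow> real \<Rightarrow> real" where
  "weak_deriv01 f = (SOME h. set_integrable lborel {0..1::real} h \<and>
      (\<forall>x\<in>{0..1}. f x = f 0 + integral {0..x} h))"

definition energy :: "(real \<Rightarrow> real) \<Rightarrow> real \<Rightarrow> (real \<Rightarrow> real) \<Rightarrow> real" where
  "energy G p u = (LINT x:{0..1}|lborel. \<bar>weak_deriv01 (\<lambda>y. G (deriv01 u y)) x\<bar> powr p)"

definition cpG :: "(real \<Rightarrow> real) \<Rightarrow> real" where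
  "cpG G = 2 * Lim at_top G"

end

theory Submission
  imports Defs
begin

lemma ae_unique01:
  fixes h1 h2 :: "real \<Rightarrow> real"
  assumes i1: "set_integrable lborel {0..1} h1" and i2: "set_integrable lborel {0..1} h2"
    and eq: "\<forall>x\<in>{0..1}. integral {0..x} h1 = integral {0..x} h2"
  shows "AE t in lborel. t \<in> {0..1} \<longrightarrow> h1 t = h2 t"
proof -
  define d where "d t = indicator {0..1::real} t * (h1 t - h2 t)" for t
  have sid: "set_integrable lborel {0..1} (\<lambda>t. h1 t - h2 t)"
    using i1 i2 by (rule set_integral_diff(1))
  have intd: "integrable lborel d"
    using sid unfolding set_integrable_def d_def by simp
  then have [measurable]: "d \<in> borel_measurable lborel" by auto
  have ii: "integrable lborel (\<lambda>t. indicator A t * d t)" if "A \<in> sets borel" for A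
    using integrable_mult_indicator[OF _ intd, of A] that by simp
  have key: "(\<integral>t. indicator {0..x} t * d t \<partial>lborel) = 0" if x: "x \<in> {0..1}" for x
  proof -
    have sub: "{0..x} \<subseteq> {0..1::real}" using x by auto
    have j1: "set_integrable lborel {0..x} h1" by (rule set_integrable_subset[OF i1 _ sub]) auto
    have j2: "set_integrable lborel {0..x} h2" by (rule set_integrable_subset[OF i2 _ sub]) auto
    have "(\<lambda>t. indicator {0..x} t * d t) = (\<lambda>t. indicator {0..x} t *\<^sub>R (h1 t - h2 t))"
      using sub by (auto simp: d_def indicator_def fun_eq_iff)
    then have "(\<integral>t. indicator {0..x} t * d t \<partial>lborel) = (LINT t:{0..x}|lborel. h1 t - h2 t)"
      by (simp add: set_lebesgue_integral_def)
    also have "\<dots> = (LINT t:{0..x}|lborel. h1 t) - (LINT t:{0..x}|lborel. h2 t)"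
      using j1 j2 by (rule set_integral_diff(2))
    also have "\<dots> = integral {0..x} h1 - integral {0..x} h2"
      using set_borel_integral_eq_integral(2)[OF j1] set_borel_integral_eq_integral(2)[OF j2] by simp
    finally show ?thesis using eq x by simp
  qed
  have Z: "(\<integral>t. indicator {y<..} t * d t \<partial>lborel) = 0" for y
  proof (cases "y < 0")
    case True
    then have "(\<lambda>t. indicator {y<..} t * d t) = (\<lambda>t. indicator {0..1} t * d t)"
      by (auto simp: d_def indicator_def fun_eq_iff)
    then show ?thesis using key[of 1] by simp
  next
    case False
    show ?thesis
    proof (cases "y \<ge> 1")
      case True
      then have "(\<lambda>t. indicator {y<..} t * d t) = (\<lambda>t. 0)"
        by (auto simp: d_def indicator_def fun_eq_iff)
      then show ?thesis by simp
    next
      case False2: False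
      have "(\<lambda>t. indicator {y<..} t * d t) = (\<lambda>t. indicator {0..1} t * d t - indicator {0..y} t * d t)"
        using False False2 by (auto simp: d_def indicator_def fun_eq_iff)
      moreover have "integrable lborel (\<lambda>t. indicator {0..1} t * d t)"
        by (rule ii) auto
      moreover have "integrable lborel (\<lambda>t. indicator {0..y} t * d t)"
        by (rule ii) auto
      ultimately show ?thesis using key[of 1] key[of y] False False2 by simp
    qed
  qed
  have dens: "density lborel (\<lambda>t. ennreal (d t)) = density lborel (\<lambda>t. ennreal (- d t))"
  proof (rule measure_eqI_lessThan)
    fix y :: real
    define e where "e t = indicator {y<..} t * d t" for t
    have inte: "integrable lborel e" unfolding e_def
      by (rule ii) auto
    then have [measurable]: "e \<in> borel_measurable lborel" by auto
    have f1: "(\<integral>\<^sup>+t. ennreal (e t) \<partial>lborel) \<noteq> \<infinity>" "(\<integral>\<^sup>+t. ennreal (- e t) \<partial>lborel) \<noteq> \<infinity>"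
      using inte unfolding real_integrable_def by auto
    have "enn2real (\<integral>\<^sup>+t. ennreal (e t) \<partial>lborel) - enn2real (\<integral>\<^sup>+t. ennreal (- e t) \<partial>lborel) = 0"
      using real_lebesgue_integral_def[OF inte] Z[of y] unfolding e_def[symmetric] by simp
    then have EQ: "enn2real (\<integral>\<^sup>+t. ennreal (e t) \<partial>lborel) = enn2real (\<integral>\<^sup>+t. ennreal (- e t) \<partial>lborel)"
      by simp
    have eqn: "(\<integral>\<^sup>+t. ennreal (e t) \<partial>lborel) = (\<integral>\<^sup>+t. ennreal (- e t) \<partial>lborel)"
    proof -
      have "(\<integral>\<^sup>+t. ennreal (e t) \<partial>lborel) = ennreal (enn2real (\<integral>\<^sup>+t. ennreal (e t) \<partial>lborel))"
        by (rule ennreal_enn2real[symmetric]) (use f1 in \<open>simp add: less_top\<close>)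
      also have "\<dots> = ennreal (enn2real (\<integral>\<^sup>+t. ennreal (- e t) \<partial>lborel))"
        by (simp only: EQ)
      also have "\<dots> = (\<integral>\<^sup>+t. ennreal (- e t) \<partial>lborel)"
        by (rule ennreal_enn2real) (use f1 in \<open>simp add: less_top\<close>)
      finally show ?thesis .
    qed
    have r1: "emeasure (density lborel (\<lambda>t. ennreal (d t))) {y<..} = (\<integral>\<^sup>+t. ennreal (e t) \<partial>lborel)"
      by (subst emeasure_density) (auto intro!: nn_integral_cong simp: e_def indicator_def)
    have r2: "emeasure (density lborel (\<lambda>t. ennreal (- d t))) {y<..} = (\<integral>\<^sup>+t. ennreal (- e t) \<partial>lborel)"
      by (subst emeasure_density) (auto intro!: nn_integral_cong simp: e_def indicator_def)
    show "emeasure (density lborel (\<lambda>t. ennreal (d t))) {y<..} < \<infinity>"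
      using r1 f1 by (simp add: less_top)
    show "emeasure (density lborel (\<lambda>t. ennreal (d t))) {y<..} = emeasure (density lborel (\<lambda>t. ennreal (- d t))) {y<..}"
      using r1 r2 eqn by simp
  qed simp_all
  have "AE t in lborel. ennreal (d t) = ennreal (- d t)"
    by (rule sigma_finite_measure.density_unique[OF sigma_finite_lborel _ _ dens]) measurable
  then show ?thesis
  proof (rule eventually_mono)
    fix t assume "ennreal (d t) = ennreal (- d t)"
    then have "d t = 0"
      by (cases "d t \<le> 0") (auto simp: ennreal_eq_0_iff ennreal_neg)
    then show "t \<in> {0..1} \<longrightarrow> h1 t = h2 t" by (auto simp: d_def)
  qed
qed


lemma construct:
  fixes G :: "real \<Rightarrow> real" and p \<delta> B :: real
  assumes Gd: "\<And>x. (G has_real_derivative deriv G x) (at x)"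
    and Gc: "continuous_on UNIV (deriv G)"
    and Gpos: "\<And>s. deriv G s > 0"
    and Godd: "\<And>s. G (-s) = - G s"
    and p: "0 < p" and d0: "0 < \<delta>" and d1: "\<delta> < 1/2" and B: "0 < B"
  shows "\<exists>u. W2p p u \<and> u 0 = 0 \<and> u 1 = 0 \<and> (\<forall>x\<in>{0..1}. 0 \<le> u x) \<and>
             (\<forall>x\<in>{\<delta>..1-\<delta>}. \<delta> * B \<le> u x) \<and> energy G p u \<le> (2 * G B / (1 - 2*\<delta>)) powr p"
proof -
  have Gcont: "isCont G x" for x using Gd[of x] by (rule DERIV_isCont)
  have Gsm: "strict_mono G"
  proof (rule strict_monoI)
    fix x y :: real assume "x < y"
    then show "G x < G y"
      by (rule DERIV_pos_imp_increasing) (use Gd Gpos in blast)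
  qed
  have Gle: "G x \<le> G y \<longleftrightarrow> x \<le> y" for x y using strict_mono_less_eq[OF Gsm] .
  have Gless: "G x < G y \<longleftrightarrow> x < y" for x y using strict_mono_less[OF Gsm] .
  have injG: "inj G" using Gsm strict_mono_imp_inj_on by blast
  have G0: "G 0 = 0" using Godd[of 0] by simp
  define Ginv where "Ginv = inv G"
  have GinvG: "Ginv (G z) = z" for z by (simp add: Ginv_def inv_f_f[OF injG])
  define A where "A = G B"
  have A: "0 < A" using Gless[of 0 B] B G0 by (simp add: A_def)
  have GmB: "G (-B) = -A" by (simp add: A_def Godd)
  have surjA: "\<exists>z. -B \<le> z \<and> z \<le> B \<and> G z = y" if "-A \<le> y" "y \<le> A" for y
  proof (rule IVT')
    show "G (-B) \<le> y" "y \<le> G B" using that GmB A_def by auto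
    show "-B \<le> B" using B by simp
    show "continuous_on {-B..B} G" using Gcont by (simp add: continuous_at_imp_continuous_on)
  qed
  have GGinv: "G (Ginv y) = y \<and> -B \<le> Ginv y \<and> Ginv y \<le> B" if yy: "-A \<le> y" "y \<le> A" for y
  proof -
    obtain z where z: "-B \<le> z" "z \<le> B" "G z = y" using surjA[OF yy] by blast
    then have "Ginv y = z" using GinvG by blast
    then show ?thesis using z by simp
  qed
  have Ginv_cont: "isCont Ginv y" if yy: "-A \<le> y" "y \<le> A" for y
  proof -
    obtain z where z: "G z = y" using surjA[OF yy] by blast
    have "isCont Ginv (G z)"
      by (rule isCont_inverse_function[where d=1]) (auto simp: GinvG Gcont)
    then show ?thesis using z by simp
  qed
  have Ginv_odd: "Ginv (-y) = - Ginv y" if yy: "-A \<le> y" "y \<le> A" for y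
  proof -
    obtain z where z: "G z = y" using surjA[OF yy] by blast
    then have "-y = G (-z)" by (simp add: Godd)
    then have e1: "Ginv (-y) = -z" using GinvG[of "-z"] by simp
    have e2: "Ginv y = z" using z GinvG[of z] by simp
    show ?thesis using e1 e2 by simp
  qed
  define m where "m = 2*A/(1-2*\<delta>)"
  have m: "0 < m" using A d1 by (simp add: m_def)
  have m2: "m * (1 - 2*\<delta>) = 2*A" using d1 by (simp add: m_def)
  define g where "g t = max (-A) (min A (A - m*(t-\<delta>)))" for t
  have grange: "-A \<le> g t \<and> g t \<le> A" for t using A by (simp add: g_def)
  define \<phi> where "\<phi> t = Ginv (g t)" for t
  have \<phi>B: "-B \<le> \<phi> t \<and> \<phi> t \<le> B" for t using GGinv grange by (simp add: \<phi>_def)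
  have G\<phi>: "G (\<phi> t) = g t" for t using GGinv grange by (simp add: \<phi>_def)
  have gcont: "isCont g t" for t unfolding g_def by (intro continuous_intros)
  have \<phi>cont: "isCont \<phi> t" for t
    unfolding \<phi>_def using gcont Ginv_cont grange by (blast intro: isCont_o2)
  have \<phi>con: "continuous_on S \<phi>" for S using \<phi>cont by (simp add: continuous_at_imp_continuous_on)
  have g_lo: "g t = A" if "t \<le> \<delta>" for t
  proof -
    have "0 \<le> m*(\<delta>-t)" using m that by simp
    then show ?thesis using A by (simp add: g_def algebra_simps)
  qed
  have g_hi: "g t = -A" if "1-\<delta> \<le> t" for t
  proof -
    have "m*(1-2*\<delta>) \<le> m*(t-\<delta>)" using m that by (intro mult_left_mono) auto
    then show ?thesis using A m2 by (simp add: g_def algebra_simps)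
  qed
  have g_mid: "g t = A - m*(t-\<delta>)" if "\<delta> \<le> t" "t \<le> 1-\<delta>" for t
  proof -
    have "0 \<le> m*(t-\<delta>)" using m that by simp
    moreover have "m*(t-\<delta>) \<le> m*(1-2*\<delta>)" using m that by (intro mult_left_mono) auto
    ultimately show ?thesis using A m2 by (simp add: g_def algebra_simps)
  qed
  have g_sym: "g (1-t) = - g t" for t
  proof -
    have "A - m*((1-t)-\<delta>) = -(A - m*(t-\<delta>))" using m2 by (simp add: algebra_simps)
    moreover have gen: "max (-A) (min A (-z)) = - max (-A) (min A z)" for z
      using A by (auto simp: max_def min_def)
    ultimately show ?thesis unfolding g_def by (simp only: gen)
  qed
  have \<phi>_sym: "\<phi> (1-t) = - \<phi> t" for t
    unfolding \<phi>_def g_sym using Ginv_odd grange by simp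
  have \<phi>_lo: "\<phi> t = B" if "t \<le> \<delta>" for t
    using g_lo[OF that] GinvG by (simp add: \<phi>_def A_def)
  have \<phi>_hi: "\<phi> t = -B" if "1-\<delta> \<le> t" for t
    using g_hi[OF that] GinvG GmB by (metis \<phi>_def)
  have g_nonneg: "0 \<le> g t" if "t \<le> 1/2" for t
  proof (cases "t \<le> \<delta>")
    case True then show ?thesis using g_lo A by simp
  next
    case False
    have "m*(t-\<delta>) \<le> m*(1/2-\<delta>)" using m that by (intro mult_left_mono) auto
    also have "\<dots> = A" using m2 by (simp add: algebra_simps)
    finally show ?thesis using False that d1 g_mid[of t] by simp
  qed
  have \<phi>_nonneg: "0 \<le> \<phi> t" if "t \<le> 1/2" for t
    using G\<phi>[of t] g_nonneg[OF that] Gle[of 0 "\<phi> t"] G0 by simp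
  define lin where "lin t = A - m*(t-\<delta>)" for t
  have linder: "(lin has_real_derivative -m) (at t)" for t
    unfolding lin_def by (auto intro!: derivative_eq_intros)
  have linin: "-A < lin t \<and> lin t < A" if "\<delta> < t" "t < 1-\<delta>" for t
  proof -
    have "0 < m*(t-\<delta>)" using m that by simp
    moreover have "m*(t-\<delta>) < m*(1-2*\<delta>)" using m that by (intro mult_strict_left_mono) auto
    ultimately show ?thesis using m2 by (simp add: lin_def algebra_simps)
  qed
  have Ginv_der: "(Ginv has_real_derivative inverse (deriv G (Ginv y))) (at y)" if "-A < y" "y < A" for y
  proof (rule DERIV_inverse_function[where f=G and a="-A" and b=A])
    show "DERIV G (Ginv y) :> deriv G (Ginv y)" by (rule Gd)
    show "deriv G (Ginv y) \<noteq> 0" using Gpos[of "Ginv y"] by simp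
    show "-A < y" "y < A" by fact+
    show "G (Ginv z) = z" if "-A < z" "z < A" for z using GGinv that by simp
    show "isCont Ginv y" using Ginv_cont that by simp
  qed
  define c where "c t = - m / deriv G (\<phi> t)" for t
  define w where "w t = indicator {\<delta><..<1-\<delta>} t * c t" for t
  have \<phi>_der: "(\<phi> has_real_derivative w t) (at t)" if tn: "t \<notin> {\<delta>, 1-\<delta>}" for t
  proof -
    consider "t < \<delta>" | "\<delta> < t \<and> t < 1-\<delta>" | "1-\<delta> < t" using tn by force
    then show ?thesis
    proof cases
      case 1
      have "((\<lambda>_. B) has_real_derivative 0) (at t)" by simp
      then have "(\<phi> has_real_derivative 0) (at t)"
        by (rule has_field_derivative_transform_within_open[where S="{..<\<delta>}"])
           (use 1 \<phi>_lo in auto)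
      then show ?thesis using 1 by (simp add: w_def)
    next
      case 3
      have "((\<lambda>_. -B) has_real_derivative 0) (at t)" by simp
      then have "(\<phi> has_real_derivative 0) (at t)"
        by (rule has_field_derivative_transform_within_open[where S="{1-\<delta><..}"])
           (use 3 \<phi>_hi in auto)
      then show ?thesis using 3 by (simp add: w_def)
    next
      case 2
      have "((\<lambda>x. Ginv (lin x)) has_real_derivative inverse (deriv G (Ginv (lin t))) * -m) (at t)"
        using Ginv_der[of "lin t"] linin[of t] 2 linder[of t] by (intro DERIV_chain2) auto
      then have "(\<phi> has_real_derivative inverse (deriv G (Ginv (lin t))) * -m) (at t)"
        by (rule has_field_derivative_transform_within_open[where S="{\<delta><..<1-\<delta>}"])
           (use 2 in \<open>auto simp: \<phi>_def g_mid lin_def\<close>)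
      moreover have "inverse (deriv G (Ginv (lin t))) * -m = w t"
        using 2 by (simp add: w_def c_def \<phi>_def g_mid lin_def divide_inverse)
      ultimately show ?thesis by simp
    qed
  qed
  have w_int: "(w has_integral (\<phi> x - \<phi> 0)) {0..x}" if xx: "0 \<le> x" for x
  proof (rule fundamental_theorem_of_calculus_interior_strong[where S="{\<delta>, 1-\<delta>}"])
    show "(\<phi> has_vector_derivative w t) (at t)" if "t \<in> {0<..<x} - {\<delta>, 1-\<delta>}" for t
      using \<phi>_der[of t] that by (simp add: has_real_derivative_iff_has_vector_derivative)
  qed (use xx \<phi>con in auto)
  have ccont: "isCont c t" for t
  proof -
    have "isCont (deriv G) (\<phi> t)" using Gc by (simp add: continuous_on_eq_continuous_at)
    then have "isCont (\<lambda>t. deriv G (\<phi> t)) t" using \<phi>cont by (rule isCont_o2[rotated])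
    then show ?thesis unfolding c_def using Gpos[of "\<phi> t"]
      by (intro continuous_intros) auto
  qed
  obtain s where s: "s \<in> {-B..B}" "\<And>y. y \<in> {-B..B} \<Longrightarrow> deriv G s \<le> deriv G y"
  proof -
    have "continuous_on {-B..B} (deriv G)" using Gc by (rule continuous_on_subset) simp
    then have "\<exists>x\<in>{-B..B}. \<forall>y\<in>{-B..B}. deriv G x \<le> deriv G y"
      using continuous_attains_inf[of "{-B..B}" "deriv G"] B by auto
    then show ?thesis using that by blast
  qed
  define k where "k = deriv G s"
  have k: "0 < k" using Gpos by (simp add: k_def)
  have cbound: "\<bar>c t\<bar> \<le> m / k" for t
  proof -
    have "k \<le> deriv G (\<phi> t)" using s(2)[of "\<phi> t"] \<phi>B[of t] by (simp add: k_def)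
    then show ?thesis using k m Gpos[of "\<phi> t"] by (simp add: c_def abs_div divide_left_mono)
  qed
  have wbound: "\<bar>w t\<bar> \<le> m / k" for t
    using cbound[of t] m k by (simp add: w_def indicator_def)
  have cmeas[measurable]: "c \<in> borel_measurable borel"
    by (rule borel_measurable_continuous_onI) (simp add: ccont continuous_at_imp_continuous_on)
  have wmeas[measurable]: "w \<in> borel_measurable borel"
    unfolding w_def by measurable
  have w_si: "set_integrable lborel {0..1} w"
    unfolding set_integrable_def
    by (rule integrableI_bounded_set_indicator[where B="m/k"]) (use wbound in auto)
  have w_sip: "set_integrable lborel {0..1} (\<lambda>t. \<bar>w t\<bar> powr p)"
    unfolding set_integrable_def
  proof (rule integrableI_bounded_set_indicator[where B="(m/k) powr p"])
    show "AE x in lborel. x \<in> {0..1} \<longrightarrow> norm (\<bar>w x\<bar> powr p) \<le> (m / k) powr p"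
      using wbound p by (auto intro!: powr_mono2)
  qed auto
  define u where "u x = integral {0..x} \<phi>" for x
  have u_der: "(u has_real_derivative \<phi> x) (at x within {0..1})" if "x \<in> {0..1}" for x
    unfolding u_def by (rule integral_has_real_derivative) (use that \<phi>con in auto)
  have weq: "\<forall>x\<in>{0..1}. \<phi> x = \<phi> 0 + integral {0..x} w"
  proof
    fix x :: real assume "x \<in> {0..1}"
    then have "integral {0..x} w = \<phi> x - \<phi> 0" using w_int[of x] integral_unique by auto
    then show "\<phi> x = \<phi> 0 + integral {0..x} w" by simp
  qed
  have W: "W2p p u"
    unfolding W2p_def
    by (rule exI[of _ \<phi>], rule exI[of _ w]) (use u_der w_si w_sip weq in blast)
  have u0: "u 0 = 0" by (simp add: u_def)
  have img: "(\<lambda>x. 1 - x) ` {0..1} = {0..1::real}"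
  proof
    show "{0..1} \<subseteq> (\<lambda>x. 1 - x) ` {0..1::real}"
    proof
      fix y :: real assume "y \<in> {0..1}"
      then show "y \<in> (\<lambda>x. 1 - x) ` {0..1}" by (intro image_eqI[of _ _ "1 - y"]) auto
    qed
  qed auto
  define V where "V x = u x - u (1 - x)" for x
  have V_der: "(V has_real_derivative 0) (at x within {0..1})" if x: "x \<in> {0..1}" for x
  proof -
    have "(u has_real_derivative \<phi> (1-x)) (at ((\<lambda>x. 1 - x) x) within ((\<lambda>x. 1 - x) ` {0..1}))"
      unfolding img using u_der[of "1-x"] x by simp
    moreover have "((\<lambda>x. 1 - x) has_real_derivative -1) (at x within {0..1})"
      by (auto intro!: derivative_eq_intros)
    ultimately have "(u \<circ> (\<lambda>x. 1 - x) has_real_derivative \<phi> (1-x) * -1) (at x within {0..1})"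
      by (rule DERIV_image_chain)
    then have "((\<lambda>x. u (1 - x)) has_real_derivative \<phi> (1-x) * -1) (at x within {0..1})"
      by (simp add: o_def)
    then have "(V has_real_derivative \<phi> x - \<phi> (1-x) * -1) (at x within {0..1})"
      unfolding V_def using u_der[OF x] by (intro DERIV_diff)
    then show ?thesis using \<phi>_sym[of x] by simp
  qed
  obtain cV where cV: "\<And>x. x \<in> {0..1} \<Longrightarrow> V x = cV"
    using has_field_derivative_zero_constant[of "{0..1::real}" V] V_der by auto
  have u1: "u 1 = 0" using cV[of 0] cV[of 1] u0 by (simp add: V_def)
  have usym: "u x = u (1 - x)" if "x \<in> {0..1}" for x
    using cV[of 0] cV[OF that] u0 u1 by (simp add: V_def)
  have u_nonneg_half: "0 \<le> u x" if "0 \<le> x" "x \<le> 1/2" for x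
    unfolding u_def
    by (rule Henstock_Kurzweil_Integration.integral_nonneg)
       (use that \<phi>con \<phi>_nonneg in \<open>auto intro: integrable_continuous_interval\<close>)
  have u_nonneg: "0 \<le> u x" if "x \<in> {0..1}" for x
  proof (cases "x \<le> 1/2")
    case True then show ?thesis using that u_nonneg_half by auto
  next
    case False then show ?thesis using that u_nonneg_half[of "1-x"] usym[OF that] by auto
  qed
  have u_high_half: "\<delta> * B \<le> u x" if "\<delta> \<le> x" "x \<le> 1/2" for x
  proof -
    have "integral {0..\<delta>} \<phi> + integral {\<delta>..x} \<phi> = integral {0..x} \<phi>"
      by (rule Henstock_Kurzweil_Integration.integral_combine)
         (use that d0 \<phi>con in \<open>auto intro: integrable_continuous_interval\<close>)
    moreover have "integral {0..\<delta>} \<phi> = integral {0..\<delta>} (\<lambda>_. B)"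
      by (rule integral_cong) (use \<phi>_lo in auto)
    moreover have "0 \<le> integral {\<delta>..x} \<phi>"
      by (rule Henstock_Kurzweil_Integration.integral_nonneg)
         (use that \<phi>con \<phi>_nonneg in \<open>auto intro: integrable_continuous_interval\<close>)
    ultimately show ?thesis using d0 by (simp add: u_def)
  qed
  have u_high: "\<delta> * B \<le> u x" if "x \<in> {\<delta>..1-\<delta>}" for x
  proof (cases "x \<le> 1/2")
    case True then show ?thesis using that u_high_half by auto
  next
    case False then show ?thesis using that u_high_half[of "1-x"] usym[of x] d0 d1 by auto
  qed
  have d01: "deriv01 u y = \<phi> y" if y: "y \<in> {0..1}" for y
  proof -
    have ex: "\<exists>d. (u has_real_derivative d) (at y within {0..1})" using u_der[OF y] by blast
    have D1: "(u has_real_derivative deriv01 u y) (at y within {0..1})"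
      unfolding deriv01_def by (rule someI_ex[OF ex])
    have c01: "cbox 0 1 = {0..1::real}" by simp
    show ?thesis
      by (rule vector_derivative_unique_within_closed_interval[of 0 1 y u])
         (use D1 u_der[OF y] y in \<open>simp_all add: has_real_derivative_iff_has_vector_derivative\<close>)
  qed
  define f where "f = (\<lambda>y. G (deriv01 u y))"
  have fg: "f y = g y" if "y \<in> {0..1}" for y using d01[OF that] G\<phi> by (simp add: f_def)
  define h0 where "h0 t = indicator {\<delta><..<1-\<delta>} t * (-m)" for t
  have g_der: "(g has_real_derivative h0 t) (at t)" if tn: "t \<notin> {\<delta>, 1-\<delta>}" for t
  proof -
    consider "t < \<delta>" | "\<delta> < t \<and> t < 1-\<delta>" | "1-\<delta> < t" using tn by force
    then show ?thesis
    proof cases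
      case 1
      have "((\<lambda>_. A) has_real_derivative 0) (at t)" by simp
      then have "(g has_real_derivative 0) (at t)"
        by (rule has_field_derivative_transform_within_open[where S="{..<\<delta>}"])
           (use 1 g_lo in auto)
      then show ?thesis using 1 by (simp add: h0_def)
    next
      case 3
      have "((\<lambda>_. -A) has_real_derivative 0) (at t)" by simp
      then have "(g has_real_derivative 0) (at t)"
        by (rule has_field_derivative_transform_within_open[where S="{1-\<delta><..}"])
           (use 3 g_hi in auto)
      then show ?thesis using 3 by (simp add: h0_def)
    next
      case 2
      have "(g has_real_derivative -m) (at t)"
        by (rule has_field_derivative_transform_within_open[OF linder[of t], where S="{\<delta><..<1-\<delta>}"])
           (use 2 in \<open>auto simp: g_mid lin_def\<close>)
      then show ?thesis using 2 by (simp add: h0_def)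
    qed
  qed
  have h0_int: "(h0 has_integral (g x - g 0)) {0..x}" if xx: "0 \<le> x" for x
  proof (rule fundamental_theorem_of_calculus_interior_strong[where S="{\<delta>, 1-\<delta>}"])
    show "(g has_vector_derivative h0 t) (at t)" if "t \<in> {0<..<x} - {\<delta>, 1-\<delta>}" for t
      using g_der[of t] that by (simp add: has_real_derivative_iff_has_vector_derivative)
  qed (use xx gcont in \<open>auto simp: continuous_at_imp_continuous_on\<close>)
  have h0meas[measurable]: "h0 \<in> borel_measurable borel"
    unfolding h0_def by measurable
  have h0_si: "set_integrable lborel {0..1} h0"
    unfolding set_integrable_def
    by (rule integrableI_bounded_set_indicator[where B="m"]) (use m in \<open>auto simp: h0_def indicator_def\<close>)
  define P where "P = (\<lambda>h. set_integrable lborel {0..1::real} h \<and> (\<forall>x\<in>{0..1}. f x = f 0 + integral {0..x} h))"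
  have P0: "P h0"
    unfolding P_def
  proof (intro conjI ballI h0_si)
    fix x :: real assume x: "x \<in> {0..1}"
    then have "integral {0..x} h0 = g x - g 0" using h0_int[of x] integral_unique by auto
    then show "f x = f 0 + integral {0..x} h0" using fg[OF x] fg[of 0] by simp
  qed
  define h where "h = weak_deriv01 f"
  have Ph: "P h"
    unfolding h_def weak_deriv01_def P_def[symmetric] by (rule someI[of P h0, OF P0])
  have hsi: "set_integrable lborel {0..1} h" using Ph by (simp add: P_def)
  have ae: "AE t in lborel. t \<in> {0..1} \<longrightarrow> h t = h0 t"
  proof (rule ae_unique01[OF hsi h0_si])
    show "\<forall>x\<in>{0..1}. integral {0..x} h = integral {0..x} h0"
      using Ph P0 unfolding P_def by (metis add_left_cancel)
  qed
  have hmeas[measurable]: "(\<lambda>t. indicator {0..1::real} t * h t) \<in> borel_measurable lborel"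
    using hsi unfolding set_integrable_def by (auto dest: borel_measurable_integrable)
  have E1: "energy G p u = (\<integral>t. \<bar>indicator {0..1::real} t * h t\<bar> powr p \<partial>lborel)"
    unfolding energy_def f_def[symmetric] h_def[symmetric] set_lebesgue_integral_def
    by (rule Bochner_Integration.integral_cong) (auto simp: indicator_def)
  have E2: "(\<integral>t. \<bar>indicator {0..1::real} t * h t\<bar> powr p \<partial>lborel) =
            (\<integral>t. \<bar>indicator {0..1::real} t * h0 t\<bar> powr p \<partial>lborel)"
  proof (rule integral_cong_AE)
    show "AE x in lborel. \<bar>indicator {0..1::real} x * h x\<bar> powr p = \<bar>indicator {0..1::real} x * h0 x\<bar> powr p"
      using ae by (rule eventually_mono) (auto simp: indicator_def)
  qed measurable
  have E3: "(\<lambda>t. \<bar>indicator {0..1::real} t * h0 t\<bar> powr p) = (\<lambda>t. indicator {\<delta><..<1-\<delta>} t * m powr p)"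
    using d0 d1 m by (auto simp: h0_def indicator_def fun_eq_iff)
  have E4: "(\<integral>t. indicator {\<delta><..<1-\<delta>} t * m powr p \<partial>lborel) = (1 - 2*\<delta>) * m powr p"
    using d1 by simp
  have "energy G p u = (1 - 2*\<delta>) * m powr p" using E1 E2 E3 E4 by simp
  also have "\<dots> \<le> m powr p" by (rule mult_left_le_one_le) (use d0 d1 in auto)
  finally have "energy G p u \<le> (2 * G B / (1 - 2*\<delta>)) powr p" by (simp add: m_def A_def)
  then show ?thesis using W u0 u1 u_nonneg u_high by blast
qed

theorem proposition4p1:
  fixes p :: real and G \<psi> :: "real \<Rightarrow> real" and x0 :: real
  assumes hp: "1 < p"
    and G_smooth: "\<forall>k. \<forall>x. ((deriv ^^ k) G) differentiable (at x)"
    and G_odd: "\<forall>s. G (- s) = - G s"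
    and G_pos: "\<forall>s. deriv G s > 0"
    and G_L1: "integrable lborel (\<lambda>s. s * deriv G s)"
    and psi_cont: "continuous_on {0..1} \<psi>"
    and psi0: "\<psi> 0 < 0" and psi1: "\<psi> 1 < 0"
    and x0: "x0 \<in> {0<..<1}" and psix0: "\<psi> x0 > 0"
  shows "(INF u\<in>obstacle_set p \<psi>. energy G p u) \<le> cpG G powr p"
proof -
  have Gd: "(G has_real_derivative deriv G x) (at x)" for x
    using G_smooth[rule_format, of 0 x] by (simp add: DERIV_deriv_iff_real_differentiable)
  have Gc: "continuous_on UNIV (deriv G)"
  proof (rule continuous_at_imp_continuous_on, rule ballI)
    fix x :: real
    have "deriv G differentiable (at x)" using G_smooth[rule_format, of 1 x] by simp
    then show "isCont (deriv G) x" by (rule differentiable_imp_continuous_within)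
  qed
  have Gpos: "deriv G s > 0" for s using G_pos by blast
  have Godd: "G (-s) = - G s" for s using G_odd by blast
  have Gmono: "G x \<le> G y" if "x \<le> y" for x y
  proof (cases "x = y")
    case False
    then have "x < y" using that by simp
    then show ?thesis using DERIV_pos_imp_increasing[of x y G] Gd Gpos by force
  qed simp
  have G0: "G 0 = 0" using Godd[of 0] by simp
  define I where "I = (\<integral>t. \<bar>t * deriv G t\<bar> \<partial>lborel)"
  have I0: "0 \<le> I" unfolding I_def by simp
  have Gbound: "G s \<le> G 1 + I" for s
  proof (cases "s \<le> 1")
    case True then show ?thesis using Gmono[OF True] I0 by simp
  next
    case False
    then have s1: "1 \<le> s" by simp
    have ftc: "(deriv G has_integral (G s - G 1)) {1..s}"
      by (rule fundamental_theorem_of_calculus[OF s1])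
         (use Gd in \<open>auto simp: has_real_derivative_iff_has_vector_derivative[symmetric] intro: has_field_derivative_at_within\<close>)
    have icont: "continuous_on {1..s} (\<lambda>t. t * deriv G t)"
      using Gc by (intro continuous_intros) (auto intro: continuous_on_subset)
    have "integral {1..s} (deriv G) \<le> integral {1..s} (\<lambda>t. t * deriv G t)"
    proof (rule integral_le)
      show "deriv G integrable_on {1..s}" using ftc by blast
      show "(\<lambda>t. t * deriv G t) integrable_on {1..s}" using icont by (rule integrable_continuous_interval)
      show "deriv G x \<le> x * deriv G x" if "x \<in> {1..s}" for x
        using that Gpos[of x] mult_right_mono[of 1 x "deriv G x"] by auto
    qed
    moreover have si: "set_integrable lborel {1..s} (\<lambda>t. t * deriv G t)"
      unfolding set_integrable_def using integrable_mult_indicator[OF _ G_L1, of "{1..s}"] by simp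
    moreover have "(LINT t:{1..s}|lborel. t * deriv G t) \<le> I"
      unfolding set_lebesgue_integral_def I_def
    proof (rule integral_mono)
      show "integrable lborel (\<lambda>x. indicat_real {1..s} x *\<^sub>R (x * deriv G x))"
        using si unfolding set_integrable_def .
      show "integrable lborel (\<lambda>t. \<bar>t * deriv G t\<bar>)" using G_L1 by (rule integrable_abs)
      show "indicat_real {1..s} x *\<^sub>R (x * deriv G x) \<le> \<bar>x * deriv G x\<bar>" for x
        by (auto simp: indicator_def)
    qed
    ultimately have "integral {1..s} (deriv G) \<le> I"
      using set_borel_integral_eq_integral(2)[OF si] by simp
    moreover have "integral {1..s} (deriv G) = G s - G 1" using ftc by (rule integral_unique)
    ultimately show ?thesis by linarith
  qed
  define L where "L = Sup (range G)"
  have bdd: "bdd_above (range G)" using Gbound by (intro bdd_aboveI[of _ "G 1 + I"]) auto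
  have GL: "G x \<le> L" for x unfolding L_def using cSUP_upper[OF UNIV_I bdd] .
  have Gtend: "(G \<longlongrightarrow> L) at_top"
  proof (rule increasing_tendsto)
    show "\<forall>\<^sub>F n in at_top. G n \<le> L" using GL by simp
    fix x assume "x < L"
    then obtain s where xs: "x < G s" using less_cSup_iff[of "range G" x] bdd by (auto simp: L_def)
    show "\<forall>\<^sub>F n in at_top. x < G n"
      using eventually_ge_at_top[of s]
    proof (rule eventually_mono)
      fix n assume "s \<le> n"
      then show "x < G n" using Gmono[of s n] xs by simp
    qed
  qed
  have cpG: "cpG G = 2 * L" unfolding cpG_def using Gtend by (simp add: tendsto_Lim)
  define c where "c = cpG G"
  have "G 0 < G 1" by (rule DERIV_pos_imp_increasing[of 0 1 G]) (use Gd Gpos in auto)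
  then have cpos: "0 < c" using GL[of 1] G0 by (simp add: c_def cpG)
  obtain xm where xm: "xm \<in> {0..1}" "\<And>y. y \<in> {0..1} \<Longrightarrow> \<psi> y \<le> \<psi> xm"
    using continuous_attains_sup[of "{0..1::real}" \<psi>] psi_cont by auto
  define K where "K = max 0 (\<psi> xm)"
  have K: "0 \<le> K" "\<And>y. y \<in> {0..1} \<Longrightarrow> \<psi> y \<le> K" using xm by (force simp: K_def intro: order_trans[OF _ max.cobounded2])+
  obtain e0 where e0: "e0 > 0" "\<And>x'. x' \<in> {0..1} \<Longrightarrow> dist x' 0 < e0 \<Longrightarrow> dist (\<psi> x') (\<psi> 0) < - \<psi> 0"
    using psi_cont psi0 unfolding continuous_on_iff by (metis atLeastAtMost_iff neg_0_less_iff_less order_refl zero_le_one)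
  obtain e1 where e1: "e1 > 0" "\<And>x'. x' \<in> {0..1} \<Longrightarrow> dist x' 1 < e1 \<Longrightarrow> dist (\<psi> x') (\<psi> 1) < - \<psi> 1"
    using psi_cont psi1 unfolding continuous_on_iff by (metis atLeastAtMost_iff neg_0_less_iff_less order_refl zero_le_one)
  define a0 where "a0 = min (min e0 e1 / 2) (1/4)"
  have a0: "0 < a0" "a0 \<le> 1/4" using e0 e1 by (auto simp: a0_def)
  have neg_lo: "\<psi> x < 0" if "x \<in> {0..1}" "x \<le> a0" for x
  proof -
    have "dist x 0 < e0" using that e0 e1 by (auto simp: a0_def dist_real_def)
    then have "dist (\<psi> x) (\<psi> 0) < - \<psi> 0" using e0(2) that by blast
    then show ?thesis by (auto simp: dist_real_def)
  qed
  have neg_hi: "\<psi> x < 0" if "x \<in> {0..1}" "1 - a0 \<le> x" for x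
  proof -
    have "dist x 1 < e1" using that e0 e1 by (auto simp: a0_def dist_real_def)
    then have "dist (\<psi> x) (\<psi> 1) < - \<psi> 1" using e1(2) that by blast
    then show ?thesis by (auto simp: dist_real_def)
  qed
  have p0: "0 < p" using hp by simp
  define F where "F x = (c / (1 - 2*x)) powr p" for x
  have Flim: "F \<midarrow>0\<rightarrow> F 0"
  proof -
    have l1: "((\<lambda>x. c / (1 - 2*x)) \<longlongrightarrow> c / (1 - 2*0)) (at 0)"
      by (intro tendsto_intros) auto
    show ?thesis unfolding F_def
      by (rule tendsto_powr[OF l1 tendsto_const]) (use cpos in simp)
  qed
  have good: "\<exists>u\<in>obstacle_set p \<psi>. energy G p u < c powr p + \<eta>" if eta: "0 < \<eta>" for \<eta>
  proof -
    obtain r where r: "r > 0" "\<And>x. x \<noteq> 0 \<and> norm (x - 0) < r \<longrightarrow> norm (F x - F 0) < \<eta>"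
      using LIM_D[OF Flim eta] by blast
    define \<delta> where "\<delta> = min (r/2) a0"
    have d: "0 < \<delta>" "\<delta> \<le> a0" "\<delta> < r" using r a0 by (auto simp: \<delta>_def)
    have d1: "\<delta> < 1/2" using d a0 by simp
    have Fd: "F \<delta> < c powr p + \<eta>"
      using r(2)[of \<delta>] d by (auto simp: F_def)
    define B where "B = K / \<delta> + 1"
    have "0 \<le> K / \<delta>" using K d by simp
    then have B: "0 < B" by (simp add: B_def)
    have dB: "K \<le> \<delta> * B" using d K by (simp add: B_def field_simps)
    obtain u where u: "W2p p u" "u 0 = 0" "u 1 = 0" "\<forall>x\<in>{0..1}. 0 \<le> u x"
        "\<forall>x\<in>{\<delta>..1-\<delta>}. \<delta> * B \<le> u x" "energy G p u \<le> (2 * G B / (1 - 2*\<delta>)) powr p"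
      using construct[OF Gd Gc Gpos Godd p0 d(1) d1 B] by blast
    have "u \<in> obstacle_set p \<psi>"
      unfolding obstacle_set_def
    proof (intro CollectI conjI ballI u(1-3))
      fix x :: real assume x: "x \<in> {0..1}"
      consider "x \<le> \<delta>" | "1 - \<delta> \<le> x" | "x \<in> {\<delta>..1-\<delta>}" by force
      then show "\<psi> x \<le> u x"
      proof cases
        case 1 then show ?thesis using neg_lo[OF x] d u(4) x by force
      next
        case 2 then show ?thesis using neg_hi[OF x] d u(4) x by force
      next
        case 3 then show ?thesis using K(2)[OF x] dB u(5) by force
      qed
    qed
    moreover have "energy G p u < c powr p + \<eta>"
    proof -
      have "2 * G B / (1 - 2*\<delta>) \<le> c / (1 - 2*\<delta>)"
        using GL[of B] d1 by (intro divide_right_mono) (auto simp: c_def cpG)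
      moreover have "0 \<le> 2 * G B / (1 - 2*\<delta>)"
        using Gmono[of 0 B] B G0 d1 by simp
      ultimately have "(2 * G B / (1 - 2*\<delta>)) powr p \<le> (c / (1 - 2*\<delta>)) powr p"
        using hp by (intro powr_mono2) auto
      then show ?thesis using u(6) Fd by (simp add: F_def)
    qed
    ultimately show ?thesis by blast
  qed
  have nonneg: "0 \<le> energy G p u" for u
    unfolding energy_def set_lebesgue_integral_def by (rule Bochner_Integration.integral_nonneg) simp
  have ne: "obstacle_set p \<psi> \<noteq> {}" using good[of 1] by auto
  have bb: "bdd_below (energy G p ` obstacle_set p \<psi>)" using nonneg by (intro bdd_belowI[of _ 0]) auto
  show ?thesis
  proof (rule ccontr)
    assume "\<not> ?thesis"
    then have lt: "c powr p < (INF u\<in>obstacle_set p \<psi>. energy G p u)" by (simp add: c_def)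
    obtain u where u: "u \<in> obstacle_set p \<psi>"
        "energy G p u < c powr p + ((INF u\<in>obstacle_set p \<psi>. energy G p u) - c powr p)"
      using good[of "(INF u\<in>obstacle_set p \<psi>. energy G p u) - c powr p"] lt by auto
    have "(INF u\<in>obstacle_set p \<psi>. energy G p u) \<le> energy G p u" by (rule cINF_lower[OF bb u(1)])
    then show False using u(2) by simp
  qed
qed

end
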